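(* Let $A$ be a circular $m\times n$ matrix and let $\Gamma$ be a closed directed path (not necessarily simple) in $D(A)$. Then for every $j\in[n]$, $$p^+(\Gamma,j)-p^-(\Gamma,j)=p(\Gamma).$$
   Context: Notation: $[n]=\{1,\dots,n\}$ with addition mod $n$ (index $0$ identified with $n$); for $a,c\in[n]$ with $t\ge0$ minimal such that $a+t\equiv c\pmod n$, $[a,c)_n=\{a,\dots,a+t-1\}$ (mod $n$). An $m\times n$ $\{0,1\}$-matrix $A$ is circular if for each row $i$ there are $\ell_i\in[n]$ and an integer $2\le k_i\le n-1$ with row $i$ the incidence vector of $[\ell_i,\ell_i+k_i)_n$. $D(A)$: node set $[n]$ (labels mod $n$); forward row arcs $a_i=(\ell_i-1,\ell_i+k_i-1)$ ($i\in[m]$), forward short arcs $a_{m+j}=(j-1,j)$ ($j\in[n]$), reverse row arcs $\bar a_i=(\ell_i+k_i-1,\ell_i-1)$, reverse short arcs $\bar a_{m+j}=(j,j-1)$; lengths $l(a_i)=k_i$, $l(a_{m+j})=1$, $l(\bar a_i)=-k_i$, $l(\bar a_{m+j})=-1$. The winding number of a closed directed path $\Gamma$ is the integer $p(\Gamma)$ with $p(\Gamma)n=\sum_{a\in E(\Gamma)}l(a)$ (arcs counted with multiplicity). A forward row arc $a_i$ jumps over node $j$ iff $j\in[\ell_i,\ell_i+k_i)_n$; the forward short arc $(j-1,j)$ jumps over $j$ only; a reverse arc $\bar a_k$ jumps over $j$ iff $a_k$ does. $p^+(\Gamma,j)$ (resp. $p^-(\Gamma,j)$) is the number of forward (resp.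 reverse) arcs of $\Gamma$, counted with multiplicity, that jump over $j$. *)

theory Defs
  imports Main
begin

text \<open>Nodes of D(A) are the elements of [n] = {1..n}; integer labels are read mod n,
  with label 0 identified with n.\<close>
definition nd :: "nat \<Rightarrow> int \<Rightarrow> nat" where
  "nd n x = nat ((x - 1) mod int n + 1)"

definition circ_interval :: "nat \<Rightarrow> nat \<Rightarrow> nat \<Rightarrow> nat set" where
  "circ_interval n a c =
     (let t0 = (LEAST t::nat. nd n (int a + int t) = nd n (int c))
      in {nd n (int a + int t) | t. t < t0})"

definition circular_matrix ::
  "nat \<Rightarrow> nat \<Rightarrow> (nat \<Rightarrow> nat \<Rightarrow> int) \<Rightarrow> (nat \<Rightarrow> nat) \<Rightarrow> (nat \<Rightarrow> nat) \<Rightarrow> bool" where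
  "circular_matrix m n A l k \<longleftrightarrow>
     (\<forall>i\<in>{1..m}. l i \<in> {1..n} \<and> 2 \<le> k i \<and> k i \<le> n - 1 \<and>
        (\<forall>j\<in>{1..n}. A i j =
           (if j \<in> circ_interval n (l i) (nd n (int (l i) + int (k i))) then 1 else 0)))"

text \<open>Underlying (forward) arcs: row arcs a_i and short arcs a_{m+j}.
  A directed arc of D(A) is a pair (underlying arc, True) for forward, (underlying arc, False) for reverse.\<close>
datatype arc = RowArc nat | ShortArc nat

type_synonym darc = "arc \<times> bool"

fun fwd_tail :: "nat \<Rightarrow> (nat \<Rightarrow> nat) \<Rightarrow> (nat \<Rightarrow> nat) \<Rightarrow> arc \<Rightarrow> nat" where
  "fwd_tail n l k (RowArc i) = nd n (int (l i) - 1)"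
| "fwd_tail n l k (ShortArc j) = nd n (int j - 1)"

fun fwd_head :: "nat \<Rightarrow> (nat \<Rightarrow> nat) \<Rightarrow> (nat \<Rightarrow> nat) \<Rightarrow> arc \<Rightarrow> nat" where
  "fwd_head n l k (RowArc i) = nd n (int (l i) + int (k i) - 1)"
| "fwd_head n l k (ShortArc j) = nd n (int j)"

fun fwd_len :: "(nat \<Rightarrow> nat) \<Rightarrow> arc \<Rightarrow> int" where
  "fwd_len k (RowArc i) = int (k i)"
| "fwd_len k (ShortArc j) = 1"

fun fwd_jumps :: "nat \<Rightarrow> (nat \<Rightarrow> nat) \<Rightarrow> (nat \<Rightarrow> nat) \<Rightarrow> arc \<Rightarrow> nat \<Rightarrow> bool" where
  "fwd_jumps n l k (RowArc i) j = (j \<in> circ_interval n (l i) (nd n (int (l i) + int (k i))))"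
| "fwd_jumps n l k (ShortArc j') j = (j = j')"

definition arc_tail :: "nat \<Rightarrow> (nat \<Rightarrow> nat) \<Rightarrow> (nat \<Rightarrow> nat) \<Rightarrow> darc \<Rightarrow> nat" where
  "arc_tail n l k e = (if snd e then fwd_tail n l k (fst e) else fwd_head n l k (fst e))"

definition arc_head :: "nat \<Rightarrow> (nat \<Rightarrow> nat) \<Rightarrow> (nat \<Rightarrow> nat) \<Rightarrow> darc \<Rightarrow> nat" where
  "arc_head n l k e = (if snd e then fwd_head n l k (fst e) else fwd_tail n l k (fst e))"

definition arc_len :: "(nat \<Rightarrow> nat) \<Rightarrow> darc \<Rightarrow> int" where
  "arc_len k e = (if snd e then fwd_len k (fst e) else - fwd_len k (fst e))"

definition D_arcs :: "nat \<Rightarrow> nat \<Rightarrow> darc set" where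
  "D_arcs m n = {(RowArc i, d) | i d. i \<in> {1..m}} \<union> {(ShortArc j, d) | j d. j \<in> {1..n}}"

definition closed_path ::
  "nat \<Rightarrow> nat \<Rightarrow> (nat \<Rightarrow> nat) \<Rightarrow> (nat \<Rightarrow> nat) \<Rightarrow> darc list \<Rightarrow> bool" where
  "closed_path m n l k \<Gamma> \<longleftrightarrow> \<Gamma> \<noteq> [] \<and> set \<Gamma> \<subseteq> D_arcs m n \<and>
     (\<forall>i < length \<Gamma>. arc_head n l k (\<Gamma> ! i) = arc_tail n l k (\<Gamma> ! ((i + 1) mod length \<Gamma>)))"

definition total_length :: "(nat \<Rightarrow> nat) \<Rightarrow> darc list \<Rightarrow> int" where
  "total_length k \<Gamma> = sum_list (map (arc_len k) \<Gamma>)"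

definition is_winding_number :: "nat \<Rightarrow> (nat \<Rightarrow> nat) \<Rightarrow> darc list \<Rightarrow> int \<Rightarrow> bool" where
  "is_winding_number n k \<Gamma> p \<longleftrightarrow> p * int n = total_length k \<Gamma>"

definition p_plus :: "nat \<Rightarrow> (nat \<Rightarrow> nat) \<Rightarrow> (nat \<Rightarrow> nat) \<Rightarrow> darc list \<Rightarrow> nat \<Rightarrow> int" where
  "p_plus n l k \<Gamma> j = int (length (filter (\<lambda>e. snd e \<and> fwd_jumps n l k (fst e) j) \<Gamma>))"

definition p_minus :: "nat \<Rightarrow> (nat \<Rightarrow> nat) \<Rightarrow> (nat \<Rightarrow> nat) \<Rightarrow> darc list \<Rightarrow> nat \<Rightarrow> int" where
  "p_minus n l k \<Gamma> j = int (length (filter (\<lambda>e. \<not> snd e \<and> fwd_jumps n l k (fst e) j) \<Gamma>))"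

end

theory Submission imports Defs begin
lemma nd_val: assumes "n > 0" "0 \<le> x" "x \<le> 2 * int n"
  shows "int (nd n x) = (if x = 0 then int n else if x \<le> int n then x else x - int n)"
proof -
  consider "x = 0" | "1 \<le> x \<and> x \<le> int n" | "int n < x" using assms by linarith
  then show ?thesis
  proof cases
    case 1
    have "(-1) mod int n = int n - 1" using assms
      by (simp add: zmod_minus1)
    then show ?thesis using 1 by (simp add: nd_def)
  next
    case 2
    then have "(x - 1) mod int n = x - 1" by (intro mod_pos_pos_trivial) auto
    then show ?thesis using 2 by (simp add: nd_def)
  next
    case 3
    then have "(x - 1 - int n) mod int n = x - 1 - int n" using assms by (intro mod_pos_pos_trivial) auto
    then have "(x - 1) mod int n = x - 1 - int n" by (metis mod_add_self2 diff_add_cancel)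
    then show ?thesis using 3 by (simp add: nd_def)
  qed
qed

lemma nd_eq_iff: assumes "n > 0" shows "nd n x = nd n y \<longleftrightarrow> x mod int n = y mod int n"
proof -
  have a: "0 \<le> (x - 1) mod int n" "0 \<le> (y - 1) mod int n" using assms by simp_all
  have "nd n x = nd n y \<longleftrightarrow> (x - 1) mod int n = (y - 1) mod int n"
    unfolding nd_def using a by (simp add: nat_eq_iff)
  also have "\<dots> \<longleftrightarrow> x mod int n = y mod int n"
    by (metis diff_add_cancel mod_add_cong mod_diff_cong)
  finally show ?thesis .
qed

lemma nd_idem: assumes "n > 0" shows "nd n (int (nd n y)) = nd n y"
proof -
  have "int (nd n y) = (y - 1) mod int n + 1" unfolding nd_def using assms by simp
  then have "int (nd n y) mod int n = y mod int n" by (simp add: mod_add_left_eq)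
  then show ?thesis using nd_eq_iff[OF assms] by simp
qed

lemma row_jumps:
  assumes n: "n > 0" and l: "l \<in> {1..n}" and k: "k < n"
  shows "j \<in> circ_interval n l (nd n (int l + int k)) \<longleftrightarrow>
         (\<exists>t<k. int (nd n (int l + int t)) = int j)"
proof -
  have le: "(LEAST t::nat. nd n (int l + int t) = nd n (int (nd n (int l + int k)))) = k"
  proof (rule Least_equality)
    show "nd n (int l + int k) = nd n (int (nd n (int l + int k)))" using nd_idem[OF n] by simp
  next
    fix t assume h: "nd n (int l + int t) = nd n (int (nd n (int l + int k)))"
    show "k \<le> t"
    proof (rule ccontr)
      assume "\<not> k \<le> t"
      have "(int l + int t) mod int n = (int l + int k) mod int n"
        using h nd_idem[OF n] nd_eq_iff[OF n] by simp
      then have "(int k - int t) mod int n = 0" by (metis mod_diff_cong diff_self add_diff_cancel_left mod_0)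
      moreover have "0 < int k - int t" "int k - int t < int n" using \<open>\<not> k \<le> t\<close> k by auto
      ultimately show False by simp
    qed
  qed
  show ?thesis unfolding circ_interval_def Let_def le by auto
qed

definition gpot :: "nat \<Rightarrow> int \<Rightarrow> int" where
  "gpot j x = (if int j \<le> x then 0 else -1)"

lemma row_jumps2:
  assumes n: "n > 0" and l: "l \<in> {1..n}" and k: "k < n" and j: "j \<in> {1..n}"
  shows "j \<in> circ_interval n l (nd n (int l + int k)) \<longleftrightarrow>
         ((l \<le> j \<and> j < l + k) \<or> (l \<le> j + n \<and> j + n < l + k))"
proof -
  have v: "int (nd n (int l + int t)) = (if int l + int t \<le> int n then int l + int t else int l + int t - int n)"
    if "t < k" for t
    using nd_val[OF n, of "int l + int t"] that l k by auto
  show ?thesis unfolding row_jumps[OF n l k]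
  proof
    assume "\<exists>t<k. int (nd n (int l + int t)) = int j"
    then obtain t where "t < k" "int (nd n (int l + int t)) = int j" by blast
    then show "(l \<le> j \<and> j < l + k) \<or> (l \<le> j + n \<and> j + n < l + k)"
      using v[of t] by (auto split: if_splits)
  next
    assume h: "(l \<le> j \<and> j < l + k) \<or> (l \<le> j + n \<and> j + n < l + k)"
    show "\<exists>t<k. int (nd n (int l + int t)) = int j"
    proof (cases "l \<le> j \<and> j < l + k")
      case True
      then show ?thesis using v[of "j - l"] j by (intro exI[of _ "j - l"]) auto
    next
      case False
      then have "l \<le> j + n \<and> j + n < l + k" using h by blast
      then show ?thesis using v[of "j + n - l"] j False by (intro exI[of _ "j + n - l"]) auto
    qed
  qed
qed

lemma fwd_identity:
  assumes n: "n > 0" and j: "j \<in> {1..n}"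
    and row: "\<And>i. a = RowArc i \<Longrightarrow> l i \<in> {1..n} \<and> 2 \<le> k i \<and> k i \<le> n - 1"
    and sh: "\<And>j'. a = ShortArc j' \<Longrightarrow> j' \<in> {1..n}"
  shows "fwd_len k a = int (fwd_head n l k a) - int (fwd_tail n l k a)
     + int n * ((if fwd_jumps n l k a j then 1 else 0) - gpot j (int (fwd_head n l k a)) + gpot j (int (fwd_tail n l k a)))"
proof (cases a)
  case (RowArc i)
  note r = row[OF RowArc]
  have lk: "l i \<in> {1..n}" "k i < n" using r by auto
  have t: "int (nd n (int (l i) - 1)) = (if l i = 1 then int n else int (l i) - 1)"
    using nd_val[OF n, of "int (l i) - 1"] r by auto
  have h: "int (nd n (int (l i) + int (k i) - 1)) = (if l i + k i - 1 \<le> n then int (l i) + int (k i) - 1 else int (l i) + int (k i) - 1 - int n)"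
    using nd_val[OF n, of "int (l i) + int (k i) - 1"] r by auto
  have J: "fwd_jumps n l k a j \<longleftrightarrow> ((l i \<le> j \<and> j < l i + k i) \<or> (l i \<le> j + n \<and> j + n < l i + k i))"
    using row_jumps2[OF n lk j] RowArc by simp
  show ?thesis using t h J r j unfolding RowArc gpot_def
    by (simp only: fwd_len.simps fwd_head.simps fwd_tail.simps) (auto split: if_splits)
next
  case (ShortArc j')
  have j': "j' \<in> {1..n}" using sh[OF ShortArc] .
  have t: "int (nd n (int j' - 1)) = (if j' = 1 then int n else int j' - 1)"
    using nd_val[OF n, of "int j' - 1"] j' by auto
  have h: "int (nd n (int j')) = int j'"
    using nd_val[OF n, of "int j'"] j' by auto
  show ?thesis using t h j j' unfolding ShortArc gpot_def by (auto split: if_splits)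
qed

lemma len_filter_int: "int (length (filter P xs)) = sum_list (map (\<lambda>x. if P x then 1 else 0) xs)"
  by (induction xs) auto

lemma sum_rot: assumes "L > 0" shows "(\<Sum>i<L. (g::nat \<Rightarrow> int) ((i + 1) mod L)) = (\<Sum>i<L. g i)"
proof -
  obtain M where M: "L = Suc M" using assms by (cases L) auto
  have "(\<Sum>i<Suc M. g ((i + 1) mod Suc M)) = (\<Sum>i<M. g ((i + 1) mod Suc M)) + g 0"
    by simp
  also have "(\<Sum>i<M. g ((i + 1) mod Suc M)) = (\<Sum>i<M. g (Suc i))"
    by (rule sum.cong) auto
  also have "\<dots> + g 0 = (\<Sum>i<Suc M. g i)" by (subst sum.lessThan_Suc_shift) simp
  finally show ?thesis using M by simp
qed

lemma sum_list_nth': "sum_list (map f xs) = (\<Sum>i<length xs. f (xs ! i))"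
  by (simp add: sum_list_sum_nth lessThan_atLeast0)

theorem lemma4p1:
  fixes m n :: nat and A :: "nat \<Rightarrow> nat \<Rightarrow> int" and l k :: "nat \<Rightarrow> nat"
    and \<Gamma> :: "darc list" and j :: nat
  assumes "circular_matrix m n A l k"
    and "closed_path m n l k \<Gamma>"
    and "j \<in> {1..n}"
  shows "is_winding_number n k \<Gamma> (p_plus n l k \<Gamma> j - p_minus n l k \<Gamma> j)"
proof -
  have n: "n > 0" using assms(3) by auto
  define L where "L = length \<Gamma>"
  have L: "L > 0" using assms(2) unfolding closed_path_def L_def by auto
  define hd' where "hd' i = arc_head n l k (\<Gamma> ! i)" for i
  define tl' where "tl' i = arc_tail n l k (\<Gamma> ! i)" for i
  define S where "S e = (if snd e \<and> fwd_jumps n l k (fst e) j then 1 else 0)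
      - (if \<not> snd e \<and> fwd_jumps n l k (fst e) j then 1 else (0::int))" for e
  have link: "hd' i = tl' ((i + 1) mod L)" if "i < L" for i
    using assms(2) that unfolding closed_path_def hd'_def tl'_def L_def by blast
  have arc: "arc_len k (\<Gamma> ! i) = int (hd' i) - int (tl' i)
      + int n * (S (\<Gamma> ! i) - gpot j (int (hd' i)) + gpot j (int (tl' i)))" if "i < L" for i
  proof -
    obtain a d where e: "\<Gamma> ! i = (a, d)" by fastforce
    have "\<Gamma> ! i \<in> D_arcs m n" using assms(2) that unfolding closed_path_def L_def
      using nth_mem by blast
    then have mem: "(\<exists>i'. a = RowArc i' \<and> i' \<in> {1..m}) \<or> (\<exists>j'. a = ShortArc j' \<and> j' \<in> {1..n})"
      unfolding D_arcs_def e by auto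
    have F: "fwd_len k a = int (fwd_head n l k a) - int (fwd_tail n l k a)
     + int n * ((if fwd_jumps n l k a j then 1 else 0) - gpot j (int (fwd_head n l k a)) + gpot j (int (fwd_tail n l k a)))"
    proof (rule fwd_identity[OF n assms(3)])
      fix i' assume "a = RowArc i'"
      then have "i' \<in> {1..m}" using mem by auto
      then show "l i' \<in> {1..n} \<and> 2 \<le> k i' \<and> k i' \<le> n - 1"
        using assms(1) unfolding circular_matrix_def by blast
    next
      fix j' assume "a = ShortArc j'" then show "j' \<in> {1..n}" using mem by auto
    qed
    show ?thesis
    proof (cases d)
      case True
      then show ?thesis using F unfolding e hd'_def tl'_def S_def arc_len_def arc_head_def arc_tail_def by simp
    next
      case False
      then show ?thesis using F unfolding e hd'_def tl'_def S_def arc_len_def arc_head_def arc_tail_def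
        by (simp add: algebra_simps)
    qed
  qed
  have "total_length k \<Gamma> = (\<Sum>i<L. arc_len k (\<Gamma> ! i))"
    unfolding total_length_def L_def by (rule sum_list_nth')
  also have "\<dots> = (\<Sum>i<L. int (hd' i) - int (tl' i)
      + int n * (S (\<Gamma> ! i) - gpot j (int (hd' i)) + gpot j (int (tl' i))))"
    using arc by (intro sum.cong) auto
  also have "\<dots> = ((\<Sum>i<L. int (hd' i)) - (\<Sum>i<L. int (tl' i)))
      + int n * ((\<Sum>i<L. S (\<Gamma> ! i)) - ((\<Sum>i<L. gpot j (int (hd' i))) - (\<Sum>i<L. gpot j (int (tl' i)))))"
    by (simp add: sum.distrib sum_subtractf sum_distrib_left algebra_simps)
  also have "(\<Sum>i<L. int (hd' i)) = (\<Sum>i<L. int (tl' i))"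
    using sum_rot[OF L, of "\<lambda>i. int (tl' i)"] link by (metis (no_types, lifting) lessThan_iff sum.cong)
  also have "(\<Sum>i<L. gpot j (int (hd' i))) = (\<Sum>i<L. gpot j (int (tl' i)))"
    using sum_rot[OF L, of "\<lambda>i. gpot j (int (tl' i))"] link by (metis (no_types, lifting) lessThan_iff sum.cong)
  also have "(\<Sum>i<L. S (\<Gamma> ! i)) = p_plus n l k \<Gamma> j - p_minus n l k \<Gamma> j"
    unfolding p_plus_def p_minus_def len_filter_int sum_list_nth' L_def S_def
    by (simp add: sum_subtractf)
  finally show ?thesis unfolding is_winding_number_def by (simp add: mult.commute)
qed
end
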